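(* Let $\mathbb F_0$ be a field and $\mathbb F=\mathbb F_0(\omega)$ a degree-$2$ extension field of $\mathbb F_0$. Let $h,d,n$ be nonnegative integers with $h\le d$, and let $A,B\in \mathbb F_0^{d\times n}$ be matrices with $\mathrm{rank}(A+\omega B)=d$. If $\mathrm{rank}\binom{A}{B}=2d-h$, then there is a matrix $Q\in \mathbb F^{h\times d}$ of rank $h$ such that $Q(A+\omega B)$ has all its entries in $\mathbb F_0$.
   Context: $\binom{A}{B}$ denotes the $2d\times n$ matrix obtained by stacking $A$ above $B$. *)

theory Defs
  imports "Jordan_Normal_Form.DL_Rank"
begin

definition is_subfield :: "'a::field set \<Rightarrow> bool" where
  "is_subfield K \<longleftrightarrow> 0 \<in> K \<and> 1 \<in> K \<and>
     (\<forall>x\<in>K. \<forall>y\<in>K. x + y \<in> K \<and> x * y \<in> K) \<and>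
     (\<forall>x\<in>K. - x \<in> K) \<and> (\<forall>x\<in>K. x \<noteq> 0 \<longrightarrow> inverse x \<in> K)"

text \<open>The simple extension K(w) when w is algebraic of degree 2 over K:
  its elements are a + b w with a, b in K.\<close>
definition quad_ext :: "'a::field set \<Rightarrow> 'a \<Rightarrow> 'a set" where
  "quad_ext K w = {a + b * w | a b. a \<in> K \<and> b \<in> K}"

definition degree2_generator :: "'a::field set \<Rightarrow> 'a \<Rightarrow> bool" where
  "degree2_generator K w \<longleftrightarrow> w \<notin> K \<and> (\<exists>p\<in>K. \<exists>q\<in>K. w ^ 2 = p + q * w)"

definition mat_over :: "'a set \<Rightarrow> 'a mat \<Rightarrow> bool" where
  "mat_over S M \<longleftrightarrow> (\<forall>i < dim_row M. \<forall>j < dim_col M. M $$ (i, j) \<in> S)"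

end

theory Submission
  imports Defs
begin


lemma sf0: "is_subfield K \<Longrightarrow> 0 \<in> K" unfolding is_subfield_def by auto
lemma sf1: "is_subfield K \<Longrightarrow> 1 \<in> K" unfolding is_subfield_def by auto
lemma sfadd: "is_subfield K \<Longrightarrow> x \<in> K \<Longrightarrow> y \<in> K \<Longrightarrow> x + y \<in> K" unfolding is_subfield_def by auto
lemma sfmult: "is_subfield K \<Longrightarrow> x \<in> K \<Longrightarrow> y \<in> K \<Longrightarrow> x * y \<in> K" unfolding is_subfield_def by auto
lemma sfuminus: "is_subfield K \<Longrightarrow> x \<in> K \<Longrightarrow> - x \<in> K" unfolding is_subfield_def by auto
lemma sfinv: "is_subfield K \<Longrightarrow> x \<in> K \<Longrightarrow> inverse x \<in> K" unfolding is_subfield_def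
  by (cases "x = 0", auto)
lemma sfdiff: "is_subfield K \<Longrightarrow> x \<in> K \<Longrightarrow> y \<in> K \<Longrightarrow> x - y \<in> K"
  using sfadd sfuminus by (metis diff_conv_add_uminus)
lemma sfsum: "is_subfield K \<Longrightarrow> (\<And>i. i \<in> S \<Longrightarrow> f i \<in> K) \<Longrightarrow> sum f S \<in> K"
proof (induction S rule: infinite_finite_induct)
  case (infinite A) then show ?case using sf0 by auto
next
  case empty then show ?case using sf0 by auto
next
  case (insert x F) then show ?case using sfadd by auto
qed


lemma gj_main_over:
  assumes K: "is_subfield K"
  shows "mat_over K A \<Longrightarrow> mat_over K B \<Longrightarrow> dim_row B = dim_row A \<Longrightarrow>
    gauss_jordan_main A B i j = (A', B') \<Longrightarrow> mat_over K A' \<and> mat_over K B'"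
proof (induction A B i j rule: gauss_jordan_main.induct)
  case (1 A B i j)
  note IH = "1.IH"
  note p = "1.prems"
  show ?case
  proof (cases "i < dim_row A \<and> j < dim_col A")
    case False
    then have "gauss_jordan_main A B i j = (A,B)" by (subst gauss_jordan_main.simps, auto)
    then show ?thesis using p by simp
  next
    case ij: True
    show ?thesis
    proof (cases "A $$ (i,j) = 0")
      case z: True
      show ?thesis
      proof (cases "[ i' . i' <- [Suc i ..< dim_row A],  A $$ (i',j) \<noteq> 0]")
        case Nil
        have "gauss_jordan_main A B i j = gauss_jordan_main A B i (Suc j)"
          by (subst gauss_jordan_main.simps, unfold Let_def, simp only: ij z Nil if_True list.case simp_thms)
        then show ?thesis using p IH(1)[OF refl refl ij refl z Nil] by simp
      next
        case (Cons i' rest)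
        have "i' \<in> set [ i' . i' <- [Suc i ..< dim_row A],  A $$ (i',j) \<noteq> 0]" unfolding Cons by simp
        then have i': "i' < dim_row A" by auto
        have "mat_over K (swaprows i i' A)" "mat_over K (swaprows i i' B)" 
          using p(1,2,3) ij i' unfolding mat_over_def mat_swaprows_def by auto
        then show ?thesis using p ij z IH(2)[OF refl refl ij refl z Cons] 
          by (simp add: Let_def gauss_jordan_main.simps[of A B i j] Cons mat_swaprows_def)
      qed
    next
      case nz: False
      show ?thesis
      proof (cases "A $$ (i,j) = 1")
        case o: True
        let ?v = "\<lambda> i. A $$ (i,j)"
        have "mat_over K (eliminate_entries ?v A i j)" "mat_over K (eliminate_entries ?v B i j)" 
          using p(1,2,3) ij unfolding mat_over_def eliminate_entries_gen_def
          by (auto intro!: sfdiff[OF K] sfmult[OF K])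
        then show ?thesis using p ij o IH(3)[OF refl refl ij refl nz o refl] 
          by (simp add: Let_def gauss_jordan_main.simps[of A B i j] eliminate_entries_gen_def)
      next
        case no: False
        let ?iv = "inverse (A $$ (i,j))"
        have iv: "?iv \<in> K" using p(1) ij sfinv[OF K] unfolding mat_over_def by auto
        have "mat_over K (multrow i ?iv A)" "mat_over K (multrow i ?iv B)" 
          using p(1,2,3) ij iv unfolding mat_over_def mat_multrow_gen_def
          by (auto intro!: sfmult[OF K])
        then show ?thesis using p ij no nz IH(4)[OF refl refl ij refl nz no refl] 
          by (simp add: Let_def gauss_jordan_main.simps[of A B i j] mat_multrow_gen_def Let_def)
      qed
    qed
  qed
qed

lemma gj_K:
  assumes K: "is_subfield K" and X: "X \<in> carrier_mat m n" and XK: "mat_over K X"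
  obtains P Pv f where "P \<in> carrier_mat m m" "Pv \<in> carrier_mat m m" "P * Pv = 1\<^sub>m m"
    "Pv * P = 1\<^sub>m m" "mat_over K P" "pivot_fun (P * X) f n"
proof -
  obtain R P' where gj: "gauss_jordan X (1\<^sub>m m) = (R, P')" by (cases "gauss_jordan X (1\<^sub>m m)", auto)
  from gauss_jordan_transform[OF X one_carrier_mat gj, of "()"]
  obtain U where U: "U \<in> Units (ring_mat TYPE('a) m ())" and R: "R = U * X" and P': "P' = U * 1\<^sub>m m"
    by auto
  from U obtain V where UV: "U \<in> carrier_mat m m" "V \<in> carrier_mat m m" "U * V = 1\<^sub>m m" "V * U = 1\<^sub>m m"
    unfolding Units_def ring_mat_def by auto
  have P'U: "P' = U" using P' UV by simp
  have "mat_over K (1\<^sub>m m)" unfolding mat_over_def using sf0[OF K] sf1[OF K] by auto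
  then have "mat_over K P'" using gj_main_over[OF K XK _ _ gj[unfolded gauss_jordan_def]] X by auto
  moreover have "row_echelon_form R" by (rule gauss_jordan_row_echelon[OF X gj])
  then obtain f where "pivot_fun R f n" unfolding row_echelon_form_def using R X UV by auto
  ultimately show ?thesis using that[of U V f] UV P'U R by auto
qed

lemma rank_le_nr:
  assumes X: "X \<in> carrier_mat m nc"
  shows "vec_space.rank m X \<le> m"
proof -
  interpret vec_space "TYPE('a::field)" m .
  have cs: "set (cols X) \<subseteq> carrier_vec m" using X by (auto simp: cols_def)
  have "subspace class_ring (span (set (cols X))) V" by (rule span_is_subspace[OF cs])
  from subspace_dim[OF this fin_dim fin_dim_span_cols[OF X]]
  show ?thesis unfolding rank_def dim_is_n .
qed

lemma inv_cols_indpt: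
  assumes Pv: "Pv \<in> carrier_mat m m" and P: "P \<in> carrier_mat m m" and PvP: "Pv * P = 1\<^sub>m m"
  shows "distinct (cols Pv)" "LinearCombinations.module.lin_indpt class_ring (module_vec TYPE('a::field) m) (set (cols Pv))"
proof -
  interpret vec_space "TYPE('a::field)" m .
  have "det Pv * det P = 1" using det_mult[OF Pv P] PvP by simp
  then have "det Pv \<noteq> 0" by auto
  then have r: "rank Pv = m" using low_rank_det_zero[OF Pv] by auto
  then show d: "distinct (cols Pv)" using non_distinct_low_rank[OF Pv] by auto
  show "lin_indpt (set (cols Pv))" by (rule full_rank_lin_indpt[OF Pv r d])
qed

lemma pivot_rank:
  assumes X: "X \<in> carrier_mat m n" and P: "P \<in> carrier_mat m m" and Pv: "Pv \<in> carrier_mat m m"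
    and PvP: "Pv * P = 1\<^sub>m m" and piv: "pivot_fun (P * X) f n"
  shows "card {i. i < m \<and> f i < n} \<le> vec_space.rank m X"
proof -
  interpret vec_space "TYPE('a::field)" m .
  let ?S = "{i. i < m \<and> f i < n}"
  have PX: "P * X \<in> carrier_mat m n" using P X by auto
  have XX: "Pv * (P * X) = X" using assoc_mult_mat[OF Pv P X] PvP X by simp
  have colX: "col X (f i) = col Pv i" if i: "i \<in> ?S" for i
  proof -
    have dr: "dim_row (P * X) = m" using PX by auto
    have e1: "(P * X) $$ (i, f i) = 1" using pivot_funD(4)[OF dr piv, of i] i by auto
    have e2: "(P * X) $$ (i', f i) = 0" if "i' < m" "i' \<noteq> i" for i'
      using pivot_funD(5)[OF dr piv, of i i'] i that by auto
    have "col (P * X) (f i) = unit_vec m i"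
      using e1 e2 i PX dr by (intro eq_vecI, auto simp: unit_vec_def)
    then have "col X (f i) = Pv *\<^sub>v unit_vec m i" using col_mult2[OF Pv PX, of "f i"] i XX by simp
    also have "\<dots> = col (Pv * 1\<^sub>m m) i" using col_mult2[OF Pv one_carrier_mat, of i] i by simp
    finally show ?thesis using Pv by simp
  qed
  have sub: "col Pv ` ?S \<subseteq> set (cols X)"
  proof
    fix v assume "v \<in> col Pv ` ?S"
    then obtain i where i: "i \<in> ?S" and v: "v = col Pv i" by auto
    have "col X (f i) \<in> set (cols X)" using i X unfolding cols_def by auto
    then show "v \<in> set (cols X)" using colX[OF i] v by simp
  qed
  have sub2: "col Pv ` ?S \<subseteq> set (cols Pv)" using Pv unfolding cols_def by auto
  have li: "lin_indpt (col Pv ` ?S)"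
    using subset_li_is_li[OF inv_cols_indpt(2)[OF Pv P PvP] sub2] .
  have "inj_on (col Pv) ?S"
  proof
    fix i j assume "i \<in> ?S" "j \<in> ?S" "col Pv i = col Pv j"
    then show "i = j" using inv_cols_indpt(1)[OF Pv P PvP] Pv
      unfolding cols_def by (auto simp: distinct_conv_nth)
  qed
  then have "card (col Pv ` ?S) = card ?S" by (rule card_image)
  with rank_ge_card_indpt[OF X sub li] show ?thesis by simp
qed

lemma lemmaR:
  assumes K: "is_subfield K" and X: "X \<in> carrier_mat m n" and XK: "mat_over K X"
    and ker: "\<And>c. (\<And>i. i < m \<Longrightarrow> c i \<in> K) \<Longrightarrow>
        (\<And>j. j < n \<Longrightarrow> (\<Sum>i=0..<m. c i * X $$ (i,j)) = 0) \<Longrightarrow> (\<forall>i<m. c i = 0)"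
  shows "vec_space.rank m X = m"
proof -
  obtain P Pv f where P: "P \<in> carrier_mat m m" and Pv: "Pv \<in> carrier_mat m m" and PPv: "P * Pv = 1\<^sub>m m"
    and PvP: "Pv * P = 1\<^sub>m m" and PK: "mat_over K P" and piv: "pivot_fun (P * X) f n"
    using gj_K[OF K X XK] by blast
  have PX: "P * X \<in> carrier_mat m n" using P X by auto
  have S: "{0..<m} \<subseteq> {i. i < m \<and> f i < n}"
  proof
    fix i0 assume "i0 \<in> {0..<m}"
    then have i0: "i0 < m" by auto
    show "i0 \<in> {i. i < m \<and> f i < n}"
    proof (rule ccontr)
      assume "i0 \<notin> {i. i < m \<and> f i < n}"
      then have fi: "f i0 = n" using pivot_funD(1)[OF _ piv, of m i0] PX i0 by fastforce
      have z: "(\<Sum>k=0..<m. P $$ (i0,k) * X $$ (k,j)) = 0" if j: "j < n" for j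
      proof -
        have "(P * X) $$ (i0, j) = 0" using pivot_funD(2)[OF _ piv, of m i0 j] PX i0 j fi by auto
        then show ?thesis using P X i0 j by (simp add: scalar_prod_def)
      qed
      have "\<forall>k<m. P $$ (i0,k) = 0"
        by (rule ker, insert PK P i0, auto simp: mat_over_def intro: z)
      then have "(P * Pv) $$ (i0, i0) = 0" using P Pv i0 by (simp add: scalar_prod_def)
      then show False using PPv i0 by simp
    qed
  qed
  then have S: "{i. i < m \<and> f i < n} = {0..<m}" by auto
  have "m \<le> vec_space.rank m X" using pivot_rank[OF X P Pv PvP piv] unfolding S by simp
  with rank_le_nr[OF X] show ?thesis by simp
qed

lemma full_rank_left_ker:
  assumes M: "M \<in> carrier_mat d n" and r: "vec_space.rank d M = d"
    and w: "\<And>l. l < n \<Longrightarrow> (\<Sum>k=0..<d. w k * M $$ (k,l)) = 0"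
    and k: "k < d"
  shows "w k = (0::'a::field)"
proof -
  interpret vec_space "TYPE('a)" d .
  obtain S where "maximal S (\<lambda>T. T \<subseteq> set (cols M) \<and> lin_indpt T)"
    using maximal_exists[of "(\<lambda>T. T \<subseteq> set (cols M) \<and> lin_indpt T)" "card (set (cols M))" "{}"]
    by (meson List.finite_set card_mono empty_iff empty_subsetI finite_lin_indpt2 rev_finite_subset)
  note max = this
  have cardS: "card S = d" using rank_card_indpt[OF M max] r by simp
  have SM: "S \<subseteq> set (cols M)" and liS: "lin_indpt S" using max unfolding maximal_def by auto
  have finS: "finite S" using SM finite_subset by blast
  obtain ss where ss: "distinct ss" "set ss = S" using finite_distinct_list[OF finS] by blast
  have len: "length ss = d" using ss cardS distinct_card by fastforce
  have ssc: "set ss \<subseteq> carrier_vec d" using ss SM M by (auto simp: cols_def)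
  define N where "N = mat_of_cols d ss"
  have N: "N \<in> carrier_mat d d" unfolding N_def using len by auto
  have cN: "cols N = ss" unfolding N_def using ssc by simp
  have "rank N = d" by (rule lin_indpt_full_rank[OF N], insert cN ss liS, auto)
  then have "det N \<noteq> 0" using det_rank_iff[OF N] by simp
  then have dt: "det (transpose_mat N) \<noteq> 0" using det_transpose[OF N] by simp
  define v where "v = vec d w"
  have v: "v \<in> carrier_vec d" unfolding v_def by simp
  have "transpose_mat N *\<^sub>v v = 0\<^sub>v d"
  proof (rule eq_vecI)
    fix i assume "i < dim_vec (0\<^sub>v d :: 'a vec)"
    then have i: "i < d" by simp
    have "ss ! i \<in> set (cols M)" using ss SM i len by auto
    then obtain l where l: "l < n" and sl: "ss ! i = col M l" using M unfolding cols_def by auto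
    have "(transpose_mat N *\<^sub>v v) $ i = col N i \<bullet> v" using i N by simp
    also have "col N i = col M l" using cN sl i N by (metis cols_length cols_nth carrier_matD(2))
    also have "col M l \<bullet> v = (\<Sum>k=0..<d. w k * M $$ (k,l))"
      unfolding v_def scalar_prod_def using M l by (auto intro: sum.cong simp: mult.commute)
    also have "\<dots> = 0" using w l by simp
    finally show "(transpose_mat N *\<^sub>v v) $ i = 0\<^sub>v d $ i" using i by simp
  qed (insert N, auto)
  then have "v = 0\<^sub>v d" using det_0_iff_vec_prod_zero_field[of "transpose_mat N" d] dt N v by auto
  then show ?thesis using k unfolding v_def by (metis index_vec index_zero_vec(1))
qed

lemma indep2:
  assumes K: "is_subfield K" and w: "\<omega> \<notin> K" and x: "x \<in> K" and y: "y \<in> K"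
    and e: "x + y * \<omega> = 0"
  shows "x = 0 \<and> y = 0"
proof (cases "y = 0")
  case True then show ?thesis using e by simp
next
  case False
  then have "\<omega> = - x * inverse y" using e by (simp add: field_simps eq_neg_iff_add_eq_0)
  then have "\<omega> \<in> K" using sfmult[OF K sfuminus[OF K x] sfinv[OF K y]] by simp
  then show ?thesis using w by simp
qed

lemma quad_sub:
  assumes K: "is_subfield K" and g: "degree2_generator K \<omega>"
  shows "is_subfield (quad_ext K \<omega>)"
proof -
  from g obtain p q where w: "\<omega> \<notin> K" and p: "p \<in> K" and q: "q \<in> K" and wq: "\<omega>^2 = p + q * \<omega>"
    unfolding degree2_generator_def by auto
  note sf = sf0[OF K] sf1[OF K] sfadd[OF K] sfmult[OF K] sfuminus[OF K] sfinv[OF K] sfdiff[OF K]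
  have mem: "a + b * \<omega> \<in> quad_ext K \<omega>" if "a \<in> K" "b \<in> K" for a b
    unfolding quad_ext_def using that by auto
  have "0 \<in> quad_ext K \<omega>" using mem[of 0 0] sf by simp
  moreover have "1 \<in> quad_ext K \<omega>" using mem[of 1 0] sf by simp
  moreover have "x + y \<in> quad_ext K \<omega> \<and> x * y \<in> quad_ext K \<omega>"
    if "x \<in> quad_ext K \<omega>" "y \<in> quad_ext K \<omega>" for x y
  proof -
    from that obtain a b c d where ab: "a \<in> K" "b \<in> K" "c \<in> K" "d \<in> K"
      and x: "x = a + b * \<omega>" and y: "y = c + d * \<omega>" unfolding quad_ext_def by auto
    have "x + y = (a + c) + (b + d) * \<omega>" unfolding x y by (simp add: algebra_simps)
    moreover have "x * y = (a * c + b * d * p) + (a * d + b * c + b * d * q) * \<omega>"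
    proof -
      have "x * y = a * c + (a * d + b * c) * \<omega> + b * d * \<omega>^2" unfolding x y
        by (simp add: algebra_simps power2_eq_square)
      also have "\<dots> = (a * c + b * d * p) + (a * d + b * c + b * d * q) * \<omega>" unfolding wq
        by (simp add: algebra_simps)
      finally show ?thesis .
    qed
    moreover have "a * c + b * d * p \<in> K" "a * d + b * c + b * d * q \<in> K"
      using ab p q sf by auto
    ultimately show ?thesis using mem ab sf by simp
  qed
  moreover have "- x \<in> quad_ext K \<omega>" if "x \<in> quad_ext K \<omega>" for x
  proof -
    from that obtain a b where ab: "a \<in> K" "b \<in> K" and x: "x = a + b * \<omega>"
      unfolding quad_ext_def by auto
    have "- x = (- a) + (- b) * \<omega>" unfolding x by simp
    then show ?thesis using mem[OF sf(5)[OF ab(1)] sf(5)[OF ab(2)]] by metis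
  qed
  moreover have "inverse x \<in> quad_ext K \<omega>" if "x \<in> quad_ext K \<omega>" "x \<noteq> 0" for x
  proof -
    from that obtain a b where ab: "a \<in> K" "b \<in> K" and x: "x = a + b * \<omega>"
      unfolding quad_ext_def by auto
    define c where "c = a + b * q"
    define N where "N = a * c - b * b * p"
    have cK: "c \<in> K" unfolding c_def using ab q sf by simp
    have NK: "N \<in> K" unfolding N_def using ab p cK sf by simp
    have prod: "x * (c + (- b) * \<omega>) = N"
    proof -
      have "x * (c + (- b) * \<omega>) = a * c + (b * c - a * b) * \<omega> - b * b * \<omega>^2"
        unfolding x by (simp add: algebra_simps power2_eq_square)
      also have "\<dots> = N" unfolding wq N_def c_def by (simp add: algebra_simps)
      finally show ?thesis .
    qed
    have N0: "N \<noteq> 0"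
    proof
      assume "N = 0"
      then have "c + (- b) * \<omega> = 0" using prod that(2) by simp
      then have "c = 0 \<and> - b = 0" using indep2[OF K w cK sf(5)[OF ab(2)]] by blast
      then have "a = 0" "b = 0" unfolding c_def by auto
      then show False using that(2) x by simp
    qed
    have "inverse x = c * inverse N + (- b * inverse N) * \<omega>"
    proof -
      have "inverse x = (c + (- b) * \<omega>) * inverse N" using prod N0 that(2)
        by (metis (no_types, lifting) divide_inverse mult.commute nonzero_eq_divide_eq)
      then show ?thesis by (simp add: algebra_simps)
    qed
    moreover have "c * inverse N \<in> K" "- b * inverse N \<in> K" using sf ab cK NK by auto
    ultimately show ?thesis using mem by metis
  qed
  ultimately show ?thesis unfolding is_subfield_def by blast
qed

lemma append_rows_idx:
  assumes A: "A \<in> carrier_mat nr1 nc" and B: "B \<in> carrier_mat nr2 nc" and i: "i < nr1 + nr2" and j: "j < nc"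
  shows "(A @\<^sub>r B) $$ (i,j) = (if i < nr1 then A $$ (i,j) else B $$ (i - nr1, j))"
  using A B i j unfolding append_rows_def by auto

lemma sum_split2: fixes d :: nat and f :: "nat \<Rightarrow> 'a::comm_monoid_add" shows "(\<Sum>k=0..<d+d. f k) = (\<Sum>k=0..<d. f k) + (\<Sum>k=0..<d. f (d + k))"
proof -
  have "(\<Sum>k=0..<d+d. f k) = (\<Sum>k=0..<d. f k) + (\<Sum>k=d..<d+d. f k)"
    using sum.atLeastLessThan_concat[of 0 d "d+d" f] by simp
  also have "(\<Sum>k=d..<d+d. f k) = (\<Sum>k=0..<d. f (d + k))"
    using sum.shift_bounds_nat_ivl[of f 0 d d] by (simp add: add.commute)
  finally show ?thesis .
qed

lemma sum_swap_mult:
  fixes x :: "nat \<Rightarrow> 'a::comm_ring_1"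
  shows "(\<Sum>i\<in>I. x i * (\<Sum>k\<in>J. y i k * m k)) = (\<Sum>k\<in>J. (\<Sum>i\<in>I. x i * y i k) * m k)"
proof -
  have "(\<Sum>i\<in>I. x i * (\<Sum>k\<in>J. y i k * m k)) = (\<Sum>i\<in>I. \<Sum>k\<in>J. x i * y i k * m k)"
    by (simp add: sum_distrib_left mult.assoc)
  also have "\<dots> = (\<Sum>k\<in>J. \<Sum>i\<in>I. x i * y i k * m k)" by (rule sum.swap)
  also have "\<dots> = (\<Sum>k\<in>J. (\<Sum>i\<in>I. x i * y i k) * m k)" by (simp add: sum_distrib_right)
  finally show ?thesis .
qed

lemma termid_gen:
  fixes w :: "'a::field"
  assumes ww: "w * w = p + q * w"
  shows "(v + (w - q) * u) * (a + w * b) = (v * a + q * v * b + p * u * b) + (w - q) * (u * a + v * b)"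
proof -
  have "(v + (w - q) * u) * (a + w * b) - ((v * a + q * v * b + p * u * b) + (w - q) * (u * a + v * b))
      = (w * w - q * w - p) * u * b" by (simp add: algebra_simps)
  then show ?thesis using ww by simp
qed

theorem lemma3p3:
  fixes F0 :: "'a::field set" and \<omega> :: 'a and h d n :: nat
    and A B :: "'a mat"
  assumes "is_subfield F0"
    and "degree2_generator F0 \<omega>"
    and "h \<le> d"
    and "A \<in> carrier_mat d n" and "B \<in> carrier_mat d n"
    and "mat_over F0 A" and "mat_over F0 B"
    and "vec_space.rank d (A + \<omega> \<cdot>\<^sub>m B) = d"
    and "vec_space.rank (2 * d) (A @\<^sub>r B) = 2 * d - h"
  shows "\<exists>Q. Q \<in> carrier_mat h d \<and> mat_over (quad_ext F0 \<omega>) Q \<and>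
             vec_space.rank h Q = h \<and> mat_over F0 (Q * (A + \<omega> \<cdot>\<^sub>m B))"
proof -
  note K = assms(1)
  note sf = sf0[OF K] sf1[OF K] sfadd[OF K] sfmult[OF K] sfuminus[OF K] sfinv[OF K] sfdiff[OF K]
  note A = assms(4) and B = assms(5) and AK = assms(6) and BK = assms(7)
  from assms(2) obtain p q where w: "\<omega> \<notin> F0" and p: "p \<in> F0" and q: "q \<in> F0"
    and wq: "\<omega>^2 = p + q * \<omega>"
    unfolding degree2_generator_def by auto
  define C where "C = A @\<^sub>r B"
  have C: "C \<in> carrier_mat (2 * d) n" unfolding C_def using A B by (simp add: mult_2)
  have Cidx1: "C $$ (k, j) = A $$ (k, j)" if "k < d" "j < n" for k j
    unfolding C_def using append_rows_idx[OF A B, of k j] that by simp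
  have Cidx2: "C $$ (d + k, j) = B $$ (k, j)" if "k < d" "j < n" for k j
    unfolding C_def using append_rows_idx[OF A B, of "d + k" j] that by simp
  have CK: "mat_over F0 C" unfolding mat_over_def
  proof (intro allI impI)
    fix i j assume i: "i < dim_row C" and j: "j < dim_col C"
    then have i': "i < d + d" and j': "j < n" using C by auto
    show "C $$ (i, j) \<in> F0"
    proof (cases "i < d")
      case True then show ?thesis using Cidx1[OF True j'] AK A j' unfolding mat_over_def by auto
    next
      case False
      define k where "k = i - d"
      have k: "i = d + k" "k < d" using i' False unfolding k_def by auto
      then show ?thesis using Cidx2[OF k(2) j'] BK B j' unfolding mat_over_def by auto
    qed
  qed
  obtain P Pv f where P: "P \<in> carrier_mat (2*d) (2*d)" and Pv: "Pv \<in> carrier_mat (2*d) (2*d)"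
    and PPv: "P * Pv = 1\<^sub>m (2*d)" and PvP: "Pv * P = 1\<^sub>m (2*d)" and PK: "mat_over F0 P"
    and piv: "pivot_fun (P * C) f n"
    using gj_K[OF K C CK] by blast
  have PC: "P * C \<in> carrier_mat (2*d) n" using P C by auto
  define Zr where "Zr = {i. i < 2*d \<and> \<not> f i < n}"
  define Pt where "Pt = {i. i < 2*d \<and> f i < n}"
  have "card Pt \<le> 2 * d - h" using pivot_rank[OF C P Pv PvP piv] assms(9) unfolding Pt_def C_def by simp
  moreover have "card Pt + card Zr = 2 * d"
  proof -
    have "Pt \<union> Zr = {0..<2*d}" "Pt \<inter> Zr = {}" unfolding Pt_def Zr_def by auto
    then show ?thesis using card_Un_disjoint[of Pt Zr] unfolding Pt_def Zr_def by auto
  qed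
  ultimately have hZ: "h \<le> card Zr" using assms(3) by linarith
  have finZ: "finite Zr" unfolding Zr_def by auto
  obtain g where g: "bij_betw g {0..<card Zr} Zr" using ex_bij_betw_nat_finite[OF finZ] by blast
  have gZ: "g i \<in> Zr" if "i < h" for i using g that hZ unfolding bij_betw_def by auto
  have g2d: "g i < 2 * d" if "i < h" for i using gZ[OF that] unfolding Zr_def by auto
  have ginj: "g i = g i' \<longleftrightarrow> i = i'" if "i < h" "i' < h" for i i'
    using g that hZ unfolding bij_betw_def inj_on_def by auto
  have zrow: "(\<Sum>k=0..<2*d. P $$ (g i, k) * C $$ (k, j)) = 0" if i: "i < h" and j: "j < n" for i j
  proof -
    have dr: "dim_row (P * C) = 2*d" using PC by auto
    have fi: "f (g i) = n" using gZ[OF i] pivot_funD(1)[OF dr piv, of "g i"] unfolding Zr_def by auto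
    have "(P * C) $$ (g i, j) = 0" using pivot_funD(2)[OF dr piv, of "g i" j] g2d[OF i] fi j by auto
    then show ?thesis using P C g2d[OF i] j by (simp add: scalar_prod_def)
  qed
  define U where "U i k = P $$ (g i, k)" for i k
  define V where "V i k = P $$ (g i, d + k)" for i k
  have UK: "U i k \<in> F0" if "i < h" "k < d" for i k
    using PK P g2d[OF that(1)] that(2) unfolding U_def mat_over_def by auto
  have VK: "V i k \<in> F0" if "i < h" "k < d" for i k
    using PK P g2d[OF that(1)] that(2) unfolding V_def mat_over_def by auto
  have E1: "(\<Sum>k=0..<d. U i k * A $$ (k,j)) + (\<Sum>k=0..<d. V i k * B $$ (k,j)) = 0"
    if i: "i < h" and j: "j < n" for i j
  proof -
    have "0 = (\<Sum>k=0..<d+d. P $$ (g i, k) * C $$ (k, j))" using zrow[OF i j] by (simp add: mult_2)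
    also have "\<dots> = (\<Sum>k=0..<d. P $$ (g i, k) * C $$ (k, j)) + (\<Sum>k=0..<d. P $$ (g i, d+k) * C $$ (d+k, j))"
      by (rule sum_split2)
    also have "\<dots> = (\<Sum>k=0..<d. U i k * A $$ (k,j)) + (\<Sum>k=0..<d. V i k * B $$ (k,j))"
      unfolding U_def V_def using Cidx1 Cidx2 j by (intro arg_cong2[where f="(+)"] sum.cong, auto)
    finally show ?thesis by simp
  qed
  have E2: "\<forall>i<h. c i = 0" if cU: "\<And>k. k < d \<Longrightarrow> (\<Sum>i=0..<h. c i * U i k) = 0"
    and cV: "\<And>k. k < d \<Longrightarrow> (\<Sum>i=0..<h. c i * V i k) = 0" for c
  proof (intro allI impI)
    fix i0 assume i0: "i0 < h"
    have all: "(\<Sum>i=0..<h. c i * P $$ (g i, k)) = 0" if k: "k < 2 * d" for k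
    proof (cases "k < d")
      case True then show ?thesis using cU[OF True] unfolding U_def by simp
    next
      case False
      from False have "d \<le> k" by simp
      then obtain k' where k'1: "k = d + k'" by (metis le_iff_add)
      have k'2: "k' < d" using k k'1 by simp
      have "(\<Sum>i=0..<h. c i * P $$ (g i, d + k')) = 0" using cV[OF k'2] unfolding V_def .
      then show ?thesis unfolding k'1 .
    qed
    have "0 = (\<Sum>k=0..<2*d. (\<Sum>i=0..<h. c i * P $$ (g i, k)) * Pv $$ (k, g i0))"
      using all by simp
    also have "\<dots> = (\<Sum>i=0..<h. c i * (\<Sum>k=0..<2*d. P $$ (g i, k) * Pv $$ (k, g i0)))"
      by (rule sum_swap_mult[symmetric])
    also have "\<dots> = (\<Sum>i=0..<h. c i * (if i = i0 then 1 else 0))"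
    proof (rule sum.cong[OF refl])
      fix i assume "i \<in> {0..<h}"
      then have i: "i < h" by simp
      have "(\<Sum>k=0..<2*d. P $$ (g i, k) * Pv $$ (k, g i0)) = (P * Pv) $$ (g i, g i0)"
        using P Pv g2d[OF i] g2d[OF i0] by (simp add: scalar_prod_def)
      also have "\<dots> = (if i = i0 then 1 else 0)" using PPv g2d[OF i] g2d[OF i0] ginj[OF i i0] by simp
      finally show "c i * (\<Sum>k=0..<2*d. P $$ (g i, k) * Pv $$ (k, g i0)) = c i * (if i = i0 then 1 else 0)"
        by simp
    qed
    also have "\<dots> = (\<Sum>i=0..<h. if i = i0 then c i else 0)" by (rule sum.cong, auto)
    also have "\<dots> = c i0" using i0 by (simp add: sum.delta)
    finally show "c i0 = 0" by simp
  qed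
  define M where "M = A + \<omega> \<cdot>\<^sub>m B"
  have M: "M \<in> carrier_mat d n" unfolding M_def using A B by auto
  have Midx: "M $$ (k, j) = A $$ (k, j) + \<omega> * B $$ (k, j)" if "k < d" "j < n" for k j
    unfolding M_def using A B that by simp
  define Q where "Q = mat h d (\<lambda>(i,k). V i k + (\<omega> - q) * U i k)"
  have Q: "Q \<in> carrier_mat h d" unfolding Q_def by simp
  have Qidx: "Q $$ (i, k) = (V i k - q * U i k) + U i k * \<omega>" if "i < h" "k < d" for i k
    unfolding Q_def using that by (simp add: algebra_simps)
  have QM: "Q * M \<in> carrier_mat h n" using Q M by simp
  have ww: "\<omega> * \<omega> = p + q * \<omega>" using wq by (simp add: power2_eq_square)
  have termid: "(v + (\<omega> - q) * u) * (a + \<omega> * b) = (v * a + q * v * b + p * u * b) + (\<omega> - q) * (u * a + v * b)"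
    for u v a b :: 'a
    by (rule termid_gen[OF ww])
  define Z where "Z i j = (\<Sum>k=0..<d. V i k * A $$ (k,j) + q * V i k * B $$ (k,j) + p * U i k * B $$ (k,j))" for i j
  have QMidx: "(Q * M) $$ (i, j) = Z i j" if i: "i < h" and j: "j < n" for i j
  proof -
    have "(Q * M) $$ (i, j) = (\<Sum>k=0..<d. Q $$ (i,k) * M $$ (k,j))"
      using Q M i j by (simp add: scalar_prod_def)
    also have "\<dots> = (\<Sum>k=0..<d. (V i k + (\<omega> - q) * U i k) * (A $$ (k, j) + \<omega> * B $$ (k, j)))"
      using Midx j i unfolding Q_def by (intro sum.cong, auto)
    also have "\<dots> = Z i j + (\<omega> - q) * ((\<Sum>k=0..<d. U i k * A $$ (k,j)) + (\<Sum>k=0..<d. V i k * B $$ (k,j)))"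
      unfolding termid Z_def by (simp add: sum.distrib sum_distrib_left distrib_left)
    also have "\<dots> = Z i j" using E1[OF i j] by simp
    finally show ?thesis .
  qed
  have ZK: "Z i j \<in> F0" if "i < h" "j < n" for i j
    unfolding Z_def using that UK VK AK BK A B p q sf unfolding mat_over_def
    by (intro sfsum[OF K], auto)
  have claimF: "\<forall>i<h. e i = 0" if eK: "\<And>i. i < h \<Longrightarrow> e i \<in> F0"
    and ez: "\<And>j. j < n \<Longrightarrow> (\<Sum>i=0..<h. e i * Z i j) = 0" for e
  proof -
    define wv where "wv k = (\<Sum>i=0..<h. e i * Q $$ (i,k))" for k
    have "wv k = 0" if k: "k < d" for k
    proof (rule full_rank_left_ker[OF M _ _ k])
      show "vec_space.rank d M = d" using assms(8) unfolding M_def .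
      fix l assume l: "l < n"
      have "(\<Sum>k=0..<d. wv k * M $$ (k,l)) = (\<Sum>i=0..<h. e i * (\<Sum>k=0..<d. Q $$ (i,k) * M $$ (k,l)))"
        unfolding wv_def by (rule sum_swap_mult[symmetric])
      also have "\<dots> = (\<Sum>i=0..<h. e i * Z i l)"
      proof (rule sum.cong[OF refl])
        fix i assume "i \<in> {0..<h}"
        then have i: "i < h" by simp
        have "(\<Sum>k=0..<d. Q $$ (i,k) * M $$ (k,l)) = (Q * M) $$ (i, l)"
          using Q M i l by (simp add: scalar_prod_def)
        then show "e i * (\<Sum>k=0..<d. Q $$ (i,k) * M $$ (k,l)) = e i * Z i l" using QMidx[OF i l] by simp
      qed
      also have "\<dots> = 0" using ez[OF l] .
      finally show "(\<Sum>k=0..<d. wv k * M $$ (k,l)) = 0" .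
    qed
    then have "(\<Sum>i=0..<h. e i * (V i k - q * U i k)) + (\<Sum>i=0..<h. e i * U i k) * \<omega> = 0"
      if k: "k < d" for k
    proof -
      have "wv k = (\<Sum>i=0..<h. e i * (V i k - q * U i k)) + (\<Sum>i=0..<h. e i * U i k) * \<omega>"
        unfolding wv_def using Qidx k
        by (simp add: sum.distrib sum_distrib_right distrib_left mult.assoc)
      then show ?thesis using \<open>\<And>k. k < d \<Longrightarrow> wv k = 0\<close>[OF k] by simp
    qed
    then have both: "(\<Sum>i=0..<h. e i * (V i k - q * U i k)) = 0 \<and> (\<Sum>i=0..<h. e i * U i k) = 0"
      if k: "k < d" for k
      using k by (intro indep2[OF K w], auto intro!: sfsum[OF K] sfmult[OF K] sfdiff[OF K] eK UK VK q)
    show ?thesis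
    proof (rule E2)
      fix k assume k: "k < d"
      show uz: "(\<Sum>i=0..<h. e i * U i k) = 0" using both[OF k] by simp
      have "(\<Sum>i=0..<h. e i * V i k) = (\<Sum>i=0..<h. e i * (V i k - q * U i k)) + q * (\<Sum>i=0..<h. e i * U i k)"
        by (simp add: sum_distrib_left algebra_simps sum.distrib[symmetric])
      then show "(\<Sum>i=0..<h. e i * V i k) = 0" using both[OF k] by simp
    qed
  qed
  have QK: "mat_over (quad_ext F0 \<omega>) Q" unfolding mat_over_def
  proof (intro allI impI)
    fix i k assume "i < dim_row Q" "k < dim_col Q"
    then have i: "i < h" and k: "k < d" using Q by auto
    have "V i k - q * U i k \<in> F0" using sfdiff[OF K VK[OF i k] sfmult[OF K q UK[OF i k]]] .
    then show "Q $$ (i, k) \<in> quad_ext F0 \<omega>" unfolding Qidx[OF i k] quad_ext_def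
      using UK[OF i k] by blast
  qed
  have rank: "vec_space.rank h Q = h"
  proof (rule lemmaR[OF quad_sub[OF K assms(2)] Q QK])
    fix c assume cK: "\<And>i. i < h \<Longrightarrow> c i \<in> quad_ext F0 \<omega>"
      and cz: "\<And>k. k < d \<Longrightarrow> (\<Sum>i=0..<h. c i * Q $$ (i,k)) = 0"
    have "\<forall>i. \<exists>ab. i < h \<longrightarrow> fst ab \<in> F0 \<and> snd ab \<in> F0 \<and> c i = fst ab + snd ab * \<omega>"
      using cK unfolding quad_ext_def by fastforce
    then obtain ab where ab: "\<And>i. i < h \<Longrightarrow> fst (ab i) \<in> F0 \<and> snd (ab i) \<in> F0 \<and> c i = fst (ab i) + snd (ab i) * \<omega>"
      by metis
    have cZ: "(\<Sum>i=0..<h. c i * Z i j) = 0" if j: "j < n" for j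
    proof -
      have "(\<Sum>i=0..<h. c i * Z i j) = (\<Sum>i=0..<h. c i * (\<Sum>k=0..<d. Q $$ (i,k) * M $$ (k,j)))"
      proof (rule sum.cong[OF refl])
        fix i assume "i \<in> {0..<h}"
        then have i: "i < h" by simp
        have "(\<Sum>k=0..<d. Q $$ (i,k) * M $$ (k,j)) = (Q * M) $$ (i, j)"
          using Q M i j by (simp add: scalar_prod_def)
        then show "c i * Z i j = c i * (\<Sum>k=0..<d. Q $$ (i,k) * M $$ (k,j))" using QMidx[OF i j] by simp
      qed
      also have "\<dots> = (\<Sum>k=0..<d. (\<Sum>i=0..<h. c i * Q $$ (i,k)) * M $$ (k,j))" by (rule sum_swap_mult)
      also have "\<dots> = 0" using cz by simp
      finally show ?thesis .
    qed
    have split: "(\<Sum>i=0..<h. fst (ab i) * Z i j) = 0 \<and> (\<Sum>i=0..<h. snd (ab i) * Z i j) = 0"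
      if j: "j < n" for j
    proof (rule indep2[OF K w])
      show "(\<Sum>i=0..<h. fst (ab i) * Z i j) \<in> F0" "(\<Sum>i=0..<h. snd (ab i) * Z i j) \<in> F0"
        using ab ZK j by (auto intro!: sfsum[OF K] sfmult[OF K])
      have "(\<Sum>i=0..<h. c i * Z i j) = (\<Sum>i=0..<h. fst (ab i) * Z i j + (snd (ab i) * Z i j) * \<omega>)"
      proof (rule sum.cong[OF refl])
        fix i assume "i \<in> {0..<h}"
        then have "c i = fst (ab i) + snd (ab i) * \<omega>" using ab by simp
        then show "c i * Z i j = fst (ab i) * Z i j + (snd (ab i) * Z i j) * \<omega>"
          by (simp add: algebra_simps)
      qed
      also have "\<dots> = (\<Sum>i=0..<h. fst (ab i) * Z i j) + (\<Sum>i=0..<h. snd (ab i) * Z i j) * \<omega>"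
        by (simp add: sum.distrib sum_distrib_right)
      finally show "(\<Sum>i=0..<h. fst (ab i) * Z i j) + (\<Sum>i=0..<h. snd (ab i) * Z i j) * \<omega> = 0"
        using cZ[OF j] by simp
    qed
    have a0: "\<forall>i<h. fst (ab i) = 0" by (rule claimF, insert ab split, auto)
    have b0: "\<forall>i<h. snd (ab i) = 0" by (rule claimF, insert ab split, auto)
    show "\<forall>i<h. c i = 0" using a0 b0 ab by simp
  qed
  have QMK: "mat_over F0 (Q * M)" unfolding mat_over_def
    using QMidx ZK Q M by auto
  show ?thesis using Q QK rank QMK unfolding M_def by blast
qed

end
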